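(* Let $a>0$, $b>0$, $q\in(0,1)$, and let $\alpha,\beta,t$ be real numbers with $\alpha+\beta t>1$. Then \[ a\gamma - b\ln(1-q) + a\psi(\alpha+\beta t) - b\psi_q(\alpha+\beta t) > 0 . \]
   Context: $\gamma$ denotes the Euler–Mascheroni constant and $\psi(t)=\Gamma'(t)/\Gamma(t)$ is the digamma function for $t>0$, where $\Gamma$ is Euler's Gamma function. For $q\in(0,1)$ and $t>0$, the $q$-Gamma function is $\Gamma_q(t)=(1-q)^{1-t}\prod_{n=1}^{\infty}\frac{1-q^n}{1-q^{t+n}}$, and $\psi_q(t)=\frac{d}{dt}\ln\Gamma_q(t)=\Gamma_q'(t)/\Gamma_q(t)$. *)

theory Defs
  imports "HOL-Analysis.Analysis"
begin

definition q_Gamma :: "real \<Rightarrow> real \<Rightarrow> real" where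
  "q_Gamma q t = (1 - q) powr (1 - t) *
     (\<Prod>n. (1 - q ^ Suc n) / (1 - q powr (t + real (Suc n))))"

definition q_Digamma :: "real \<Rightarrow> real \<Rightarrow> real" where
  "q_Digamma q t = deriv (\<lambda>s. ln (q_Gamma q s)) t"

end

theory Submission
  imports Defs
begin
lemma hder:
  fixes q s :: real and k :: real
  assumes "0<q" "q<1" "s + k > 0"
  shows "((\<lambda>s. ln c - ln (1 - q powr (s + k))) has_field_derivative
     (ln q * q powr (s + k) / (1 - q powr (s + k)))) (at s within S)"
proof -
  have "q powr (s+k) < 1" using assms powr_less_mono2[of "s+k" q 1] by simp
  then have "exp ((s+k) * ln q) < 1" using assms by (simp add: powr_def)
  then show ?thesis using assms unfolding powr_def
    by (auto intro!: derivative_eq_intros)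
qed

lemma qdig:
  fixes q x :: real assumes q0: "0<q" and q1: "q<1" and x0: "x>0"
  shows "q_Digamma q x < - ln (1-q)"
proof -
  define h where "h n s = ln (1 - q^Suc n) - ln (1 - q powr (s + real (Suc n)))" for n s
  define h' where "h' n s = ln q * q powr (s + real (Suc n)) / (1 - q powr (s + real (Suc n)))" for n s
  define S :: "real set" where "S = {-1/2<..}"
  have pl1: "q powr y < 1" if "y>0" for y using q0 q1 powr_less_mono2[of y q 1] that by simp
  have cS: "convex S" and oS: "open S" unfolding S_def by auto
  have xS: "x \<in> S" and zS: "0 \<in> S" using x0 unfolding S_def by auto
  have der: "(h n has_field_derivative h' n s) (at s within S)" if "s \<in> S" for n s
    unfolding h_def h'_def using that q0 q1 unfolding S_def by (intro hder) auto
  define c where "c = 1 - q powr (1/2)"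
  have c0: "c > 0" unfolding c_def using pl1[of "1/2"] by simp
  have lnq: "ln q < 0" using q0 q1 by simp
  have bound: "norm (h' n s) \<le> (- ln q / c) * q^n" if "s \<in> S" for n s
  proof -
    have y: "s + real (Suc n) \<ge> 1/2" "s + real (Suc n) \<ge> real n" using that unfolding S_def by auto
    have p1: "q powr (s + real (Suc n)) \<le> q ^ n"
      using powr_mono'[OF y(2), of q] q0 q1 by (simp add: powr_realpow)
    have p2: "q powr (s + real (Suc n)) \<le> q powr (1/2)"
      using powr_mono'[OF y(1), of q] q0 q1 by simp
    have d: "1 - q powr (s + real (Suc n)) \<ge> c" using p2 unfolding c_def by simp
    have "norm (h' n s) = (- ln q) * q powr (s + real (Suc n)) / (1 - q powr (s + real (Suc n)))"
      unfolding h'_def using lnq c0 d by (simp add: abs_mult abs_divide)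
    also have "\<dots> \<le> (- ln q) * q ^ n / c"
      using lnq c0 d p1 mult_nonpos_nonneg[of "ln q" "q^n"] q0 by (intro frac_le mult_left_mono) auto
    finally show ?thesis by simp
  qed
  have sM: "summable (\<lambda>n. (- ln q / c) * q^n)"
    using q0 q1 by (intro summable_mult summable_geometric) auto
  have unif: "uniformly_convergent_on S (\<lambda>n s. \<Sum>i<n. h' i s)"
    by (rule Weierstrass_m_test'[OF bound sM])
  have h0: "summable (\<lambda>n. h n 0)"
  proof -
    have "h n 0 = 0" for n unfolding h_def using q0 powr_realpow[OF q0, of "Suc n"] by simp
    then show ?thesis by simp
  qed
  have ser: "summable (\<lambda>n. h n s)" "((\<lambda>s. \<Sum>n. h n s) has_field_derivative (\<Sum>n. h' n s)) (at s)"
    if "s \<in> S" for s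
    using has_field_derivative_series'[OF cS der unif zS h0, of s] that oS
    by (auto simp: interior_open)
  have eq: "ln (q_Gamma q s) = (1 - s) * ln (1 - q) + (\<Sum>n. h n s)" if "s \<in> S" for s
  proof -
    have fr: "(1 - q ^ Suc n) / (1 - q powr (s + real (Suc n))) = exp (h n s)" for n
    proof -
      have a: "1 - q ^ Suc n > 0" using q0 q1 power_strict_decreasing[of 0 "Suc n" q] by simp
      have b: "1 - q powr (s + real (Suc n)) > 0" using pl1[of "s + real (Suc n)"] that
        unfolding S_def by auto
      show ?thesis unfolding h_def using a b by (simp add: exp_diff)
    qed
    have "q_Gamma q s = (1 - q) powr (1 - s) * exp (\<Sum>n. h n s)"
      unfolding q_Gamma_def fr using prodinf_exp[OF ser(1)[OF that]] by simp
    then show ?thesis using q0 q1 by (simp add: ln_mult)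
  qed
  have D: "((\<lambda>s. ln (q_Gamma q s)) has_field_derivative (- ln (1 - q) + (\<Sum>n. h' n x))) (at x)"
  proof -
    have "((\<lambda>s. (1 - s) * ln (1 - q) + (\<Sum>n. h n s)) has_field_derivative (- ln (1 - q) + (\<Sum>n. h' n x))) (at x)"
      using ser(2)[OF xS] by (auto intro!: derivative_eq_intros)
    moreover have "eventually (\<lambda>s. ln (q_Gamma q s) = (1 - s) * ln (1 - q) + (\<Sum>n. h n s)) (nhds x)"
      using eventually_nhds_in_open[OF oS xS] by (rule eventually_mono) (use eq in auto)
    ultimately show ?thesis by (subst DERIV_cong_ev[OF refl _ refl]) auto
  qed
  have qd: "q_Digamma q x = - ln (1 - q) + (\<Sum>n. h' n x)"
    unfolding q_Digamma_def using D by (rule DERIV_imp_deriv)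
  have neg: "- h' n x > 0" for n
  proof -
    have "q powr (x + real (Suc n)) < 1" using pl1 x0 by simp
    then show ?thesis unfolding h'_def using lnq q0 by (simp add: divide_neg_pos mult_neg_pos)
  qed
  have sh: "summable (\<lambda>n. h' n x)"
    by (rule summable_comparison_test'[OF sM]) (use bound xS in auto)
  have "(\<Sum>n. - h' n x) > 0"
    by (rule suminf_pos) (use sh neg in \<open>auto intro: summable_minus\<close>)
  then have "(\<Sum>n. h' n x) < 0" using suminf_minus[OF sh] by simp
  then show ?thesis using qd by simp
qed

theorem lemma3p4:
  fixes a b q \<alpha> \<beta> t :: real
  assumes "a > 0" and "b > 0" and "0 < q" and "q < 1" and "\<alpha> + \<beta> * t > 1"
  shows "a * euler_mascheroni - b * ln (1 - q) + a * Digamma (\<alpha> + \<beta> * t)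
           - b * q_Digamma q (\<alpha> + \<beta> * t) > 0"
proof -
  have "Digamma (1::real) < Digamma (\<alpha> + \<beta> * t)"
    using assms(5) by (intro Digamma_real_strict_mono) auto
  then have 1: "a * (euler_mascheroni + Digamma (\<alpha> + \<beta> * t)) > 0"
    using assms(1) by simp
  have "q_Digamma q (\<alpha> + \<beta> * t) < - ln (1 - q)"
    using assms by (intro qdig) auto
  then have 2: "b * (- ln (1 - q) - q_Digamma q (\<alpha> + \<beta> * t)) > 0" using assms(2) by simp
  from 1 2 show ?thesis by (simp add: algebra_simps)
qed
end
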